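(* Let $f: \mathbb{R}^n \to \mathbb{R}^n$ be topical and $h \in \mathbb{R}$. Then $f$ has an eigenvector with eigenvalue $h$ (i.e. $f(v) = v + h$ for some $v \in \mathbb{R}^n$) if and only if there exists $x \in \mathbb{R}^n$ such that $\|f^k(x) - kh\|_\infty$ is bounded as $k \to \infty$.
   Context: $f$ is topical if $f(x+h) = f(x)+h$ for all $h\in\mathbb{R}$ (scalar added to each coordinate) and $x\le y$ componentwise implies $f(x)\le f(y)$. $\|\cdot\|_\infty$ is the supremum norm. *)

theory Defs
  imports "HOL-Analysis.Analysis"
begin

definition cvec :: "real \<Rightarrow> real ^ 'n" where
  "cvec h = (\<chi> i. h)"

definition topical :: "(real ^ 'n \<Rightarrow> real ^ 'n) \<Rightarrow> bool" where
  "topical f \<longleftrightarrow>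
     (\<forall>x h. f (x + cvec h) = f x + cvec h) \<and>
     (\<forall>x y. (\<forall>i. x $ i \<le> y $ i) \<longrightarrow> (\<forall>i. f x $ i \<le> f y $ i))"

definition supnorm :: "real ^ 'n \<Rightarrow> real" where
  "supnorm x = Max (range (\<lambda>i. \<bar>x $ i\<bar>))"

end

theory Submission
  imports Defs
begin

lemma cvec_nth[simp]: "cvec h $ i = h" by (simp add: cvec_def)

lemma top_mono: "topical g \<Longrightarrow> (\<forall>i. x$i \<le> y$i) \<Longrightarrow> g x $ i \<le> g y $ i"
  unfolding topical_def by blast

lemma top_shift:
  assumes "topical g" "\<forall>i. x$i \<le> y$i + c"
  shows "g x $ i \<le> g y $ i + c"
proof -
  have "g x $ i \<le> g (y + cvec c) $ i" using assms by (intro top_mono) auto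
  also have "g (y + cvec c) = g y + cvec c" using assms(1) unfolding topical_def by blast
  finally show ?thesis by simp
qed

lemma supnorm_ge: "\<bar>x $ i\<bar> \<le> supnorm (x :: real ^ 'n)"
  unfolding supnorm_def by (rule Max_ge) auto

lemma supnorm_le: "(\<And>i. \<bar>x $ i\<bar> \<le> B) \<Longrightarrow> supnorm (x :: real ^ 'n) \<le> B"
  unfolding supnorm_def by (subst Max_le_iff) auto

lemma fixed_point:
  fixes g :: "real ^ 'n \<Rightarrow> real ^ 'n"
  assumes tg: "topical g" and bd: "\<And>k i. \<bar>(g ^^ k) x $ i\<bar> \<le> B"
  shows "\<exists>w. g w = w"
proof -
  define a where "a k i = (g ^^ k) x $ i" for k i
  define s where "s m i = (SUP k\<in>{m..}. a k i)" for m i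
  define z where "z = (\<chi> i. INF m. s m i)"
  have abd: "\<bar>a k i\<bar> \<le> B" for k i using bd a_def by simp
  have bddA: "bdd_above ((\<lambda>k. a k i) ` {m..})" for m i
    using abd by (intro bdd_aboveI2[of _ _ B]) (auto simp: abs_le_iff)
  have as: "a k i \<le> s m i" if "m \<le> k" for k m i
    unfolding s_def using that bddA by (intro cSUP_upper) auto
  have sle: "s m i \<le> B" for m i
    unfolding s_def using abd by (intro cSUP_least) (auto simp: abs_le_iff)
  have sge: "- B \<le> s m i" for m i
    using as[of m m i] abd[of m i] by linarith
  have smono: "s m' i \<le> s m i" if "m \<le> m'" for m m' i
  proof -
    have "s m' i = (SUP k\<in>{m'..}. a k i)" by (simp add: s_def)
    also have "\<dots> \<le> s m i" by (rule cSUP_least) (use that as in auto)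
    finally show ?thesis .
  qed
  have bddS: "bdd_below (range (\<lambda>m. s m i))" for i
    using sge by (intro bdd_belowI2[of _ "-B"]) auto
  have zs: "z $ i \<le> s m i" for m i
    unfolding z_def using bddS by (auto intro: cINF_lower)
  have zge: "- B \<le> z $ i" for i
    unfolding z_def by (auto intro: cINF_greatest sge)
  have gz: "z $ i \<le> g z $ i" for i
  proof (rule field_le_epsilon)
    fix e :: real assume e: "0 < e"
    have "\<forall>j. eventually (\<lambda>m. s m j \<le> z $ j + e) sequentially"
    proof
      fix j
      have "(INF m. s m j) < z $ j + e" using e by (simp add: z_def)
      then have "\<exists>m\<in>UNIV. s m j < z $ j + e"
        by (subst (asm) cINF_less_iff[OF _ bddS]) auto
      then obtain m where m: "s m j < z $ j + e" by blast
      show "eventually (\<lambda>m. s m j \<le> z $ j + e) sequentially"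
        unfolding eventually_sequentially
      proof (intro exI[of _ m] allI impI)
        fix n assume "m \<le> n"
        then show "s n j \<le> z $ j + e" using m smono[of m n j] by linarith
      qed
    qed
    then have "eventually (\<lambda>m. \<forall>j. s m j \<le> z $ j + e) sequentially"
      by (intro eventually_all_finite) blast
    then obtain m where m: "\<forall>j. s m j \<le> z $ j + e"
      by (auto simp: eventually_sequentially)
    define S where "S = (\<chi> j. s m j)"
    have "s (Suc m) i \<le> g S $ i"
      unfolding s_def
    proof (rule cSUP_least)
      fix k assume k: "k \<in> {Suc m..}"
      then obtain k' where k': "k = Suc k'" "m \<le> k'" by (cases k) auto
      have "a k i = g ((g ^^ k') x) $ i" using k' a_def by simp
      also have "\<dots> \<le> g S $ i"
        using k' as by (intro top_mono[OF tg]) (auto simp: S_def a_def)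
      finally show "a k i \<le> g S $ i" .
    qed auto
    also have "g S $ i \<le> g z $ i + e"
      using m by (intro top_shift[OF tg]) (auto simp: S_def)
    finally show "z $ i \<le> g z $ i + e" using zs[of i "Suc m"] by linarith
  qed
  define b where "b k = (g ^^ k) z" for k
  have binc: "b k $ i \<le> b (Suc k) $ i" for k i
  proof (induction k arbitrary: i)
    case 0 then show ?case using gz by (simp add: b_def)
  next
    case (Suc k) then show ?case
      by (simp add: b_def) (rule top_mono[OF tg], simp add: b_def)
  qed
  have bmono: "b k $ i \<le> b k' $ i" if "k \<le> k'" for k k' i
    using that by (induction rule: dec_induct) (auto intro: order_trans binc)
  have zx: "\<forall>i. z $ i \<le> x $ i + 2 * B"
  proof
    fix i
    have "z $ i \<le> B" using zs[of i 0] sle[of 0 i] by linarith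
    moreover have "- B \<le> x $ i" using abd[of 0 i] by (simp add: a_def abs_le_iff)
    ultimately show "z $ i \<le> x $ i + 2 * B" by linarith
  qed
  have bx: "b k $ i \<le> a k i + 2 * B" for k i
  proof (induction k arbitrary: i)
    case 0 then show ?case using zx by (simp add: b_def a_def)
  next
    case (Suc k) then show ?case
      by (simp add: b_def a_def) (rule top_shift[OF tg], simp add: b_def a_def)
  qed
  have bbd: "b k $ i \<le> 3 * B" for k i using bx[of k i] abd[of k i] by (simp add: abs_le_iff)
  have bddB: "bdd_above (range (\<lambda>k. b k $ i))" for i
    using bbd by (intro bdd_aboveI2[of _ _ "3*B"]) auto
  define w where "w = (\<chi> i. SUP k. b k $ i)"
  have wi: "w $ i = (SUP k. b k $ i)" for i unfolding w_def by (rule vec_lambda_beta)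
  have bw: "b k $ i \<le> w $ i" for k i
    unfolding w_def using bddB by (auto intro: cSUP_upper)
  have ge0: "(SUP k. b k $ i) \<le> g w $ i" for i
  proof (rule cSUP_least)
    fix k
    have "b k $ i \<le> b (Suc k) $ i" by (rule binc)
    also have "\<dots> = g (b k) $ i" by (simp add: b_def)
    also have "\<dots> \<le> g w $ i" using bw by (intro top_mono[OF tg]) auto
    finally show "b k $ i \<le> g w $ i" .
  qed auto
  have ge: "w $ i \<le> g w $ i" for i using ge0[of i] wi[of i] by simp
  have le: "g w $ i \<le> w $ i" for i
  proof (rule field_le_epsilon)
    fix e :: real assume e: "0 < e"
    have "\<forall>j. eventually (\<lambda>k. w $ j \<le> b k $ j + e) sequentially"
    proof
      fix j
      have "w $ j - e < (SUP k. b k $ j)" using e wi[of j] by linarith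
      then have "\<exists>k\<in>UNIV. w $ j - e < b k $ j"
        by (subst (asm) less_cSUP_iff[OF _ bddB]) auto
      then obtain k where k: "w $ j - e < b k $ j" by blast
      show "eventually (\<lambda>k. w $ j \<le> b k $ j + e) sequentially"
        unfolding eventually_sequentially
        proof (intro exI[of _ k] allI impI)
        fix n assume "k \<le> n"
        then show "w $ j \<le> b n $ j + e" using k bmono[of k n j] by linarith
      qed
    qed
    then have "eventually (\<lambda>k. \<forall>j. w $ j \<le> b k $ j + e) sequentially"
      by (intro eventually_all_finite) blast
    then obtain k where k: "\<forall>j. w $ j \<le> b k $ j + e"
      by (auto simp: eventually_sequentially)
    have "g w $ i \<le> g (b k) $ i + e" using k by (rule top_shift[OF tg])
    also have "g (b k) $ i = b (Suc k) $ i" by (simp add: b_def)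
    finally show "g w $ i \<le> w $ i + e" using bw[of "Suc k" i] by linarith
  qed
  have "g w = w" unfolding vec_eq_iff using ge le order_antisym by blast
  then show ?thesis by blast
qed

theorem lemma3p1:
  fixes f :: "real ^ 'n \<Rightarrow> real ^ 'n" and h :: real
  assumes "topical f"
  shows "(\<exists>v. f v = v + cvec h) \<longleftrightarrow>
         (\<exists>x. \<exists>B. \<forall>k::nat. supnorm ((f ^^ k) x - cvec (real k * h)) \<le> B)"
proof
  assume "\<exists>v. f v = v + cvec h"
  then obtain v where v: "f v = v + cvec h" by blast
  have "(f ^^ k) v = v + cvec (real k * h)" for k
  proof (induction k)
    case 0 then show ?case by (simp add: vec_eq_iff)
  next
    case (Suc k)
    have "(f ^^ Suc k) v = f (v + cvec (real k * h))" using Suc by simp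
    also have "\<dots> = f v + cvec (real k * h)" using assms unfolding topical_def by blast
    finally show ?case using v by (simp add: vec_eq_iff algebra_simps)
  qed
  then show "\<exists>x. \<exists>B. \<forall>k::nat. supnorm ((f ^^ k) x - cvec (real k * h)) \<le> B"
    by (intro exI[of _ v] exI[of _ "supnorm v"]) simp
next
  assume "\<exists>x. \<exists>B. \<forall>k::nat. supnorm ((f ^^ k) x - cvec (real k * h)) \<le> B"
  then obtain x B where xB: "\<forall>k::nat. supnorm ((f ^^ k) x - cvec (real k * h)) \<le> B" by blast
  define g where "g y = f y - cvec h" for y
  have fsh: "f (y + cvec c) = f y + cvec c" for y c using assms unfolding topical_def by blast
  have tg: "topical g"
    unfolding topical_def g_def
  proof (intro conjI allI impI)
    fix y c show "f (y + cvec c) - cvec h = f y - cvec h + cvec c" using fsh by simp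
  next
    fix y z i assume "\<forall>i. (y::real^'n) $ i \<le> z $ i"
    then show "(f y - cvec h) $ i \<le> (f z - cvec h) $ i" using top_mono[OF assms] by simp
  qed
  have gk: "(g ^^ k) x = (f ^^ k) x - cvec (real k * h)" for k
  proof (induction k)
    case 0 then show ?case by (simp add: vec_eq_iff)
  next
    case (Suc k)
    have e: "(f ^^ k) x - cvec (real k * h) = (f ^^ k) x + cvec (- (real k * h))"
      by (simp add: vec_eq_iff)
    have "(g ^^ Suc k) x = f ((f ^^ k) x + cvec (- (real k * h))) - cvec h"
      using Suc by (simp only: funpow.simps comp_apply e) (simp add: g_def)
    also have "\<dots> = f ((f ^^ k) x) + cvec (- (real k * h)) - cvec h" by (simp add: fsh)
    finally show ?case by (simp add: vec_eq_iff algebra_simps)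
  qed
  have "\<bar>(g ^^ k) x $ i\<bar> \<le> B" for k i
    using supnorm_ge[of "(g ^^ k) x" i] xB gk by (metis order_trans)
  then obtain w where "g w = w" using fixed_point[OF tg] by blast
  then have "f w = w + cvec h" by (simp add: g_def vec_eq_iff algebra_simps)
  then show "\<exists>v. f v = v + cvec h" by blast
qed

end
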